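(* Let $\Psi=\{\psi_i\}_{i=1}^N\subset\mathbb{R}^d$ be a frame for $\mathbb{R}^d$ with $\sum_{i=1}^N\psi_i=0$, and let $\mu=\frac1N\sum_{i=1}^N\delta_{\psi_i}$. Then $\mu$ has no equal-weight transport dual supported on a set of cardinality $d$; that is, there is no measure of the form $\nu=\frac1d\sum_{k=1}^d\delta_{\varphi_k}$ with $d$ distinct points $\varphi_1,\dots,\varphi_d\in\mathbb{R}^d$ such that $\nu\in D_\mu$.
   Context: A finite frame for $\mathbb{R}^d$ is a finite set of vectors spanning $\mathbb{R}^d$. $\Gamma(\mu,\nu)$ is the set of probability measures on $\mathbb{R}^d\times\mathbb{R}^d$ with marginals $\mu$ and $\nu$. For a probabilistic frame $\mu$ (a probability measure with finite second moment whose support spans $\mathbb{R}^d$), a probability measure $\nu$ with finite second moment is a transport dual to $\mu$ if there exists $\gamma\in\Gamma(\mu,\nu)$ with $\iint xy^\top d\gamma(x,y)=I$; $D_\mu$ denotes the set of transport duals of $\mu$. *)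

theory Defs
  imports "HOL-Probability.Probability"
begin

definition finite_frame :: "nat \<Rightarrow> (nat \<Rightarrow> real^'d) \<Rightarrow> bool" where
  "finite_frame N \<psi> \<longleftrightarrow> inj_on \<psi> {..<N} \<and> span (\<psi> ` {..<N}) = UNIV"

definition empirical_measure :: "'i set \<Rightarrow> ('i \<Rightarrow> real^'d) \<Rightarrow> (real^'d) measure" where
  "empirical_measure I \<psi> = distr (uniform_count_measure I) borel \<psi>"

definition outer :: "real^'d \<Rightarrow> real^'d \<Rightarrow> real^'d^'d" where
  "outer x y = (\<chi> i j. x $ i * y $ j)"

definition finite_second_moment :: "(real^'d) measure \<Rightarrow> bool" where
  "finite_second_moment \<nu> \<longleftrightarrow> prob_space \<nu> \<and> sets \<nu> = sets borel
     \<and> integrable \<nu> (\<lambda>x. (norm x)\<^sup>2)"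

definition couplings :: "(real^'d) measure \<Rightarrow> (real^'d) measure \<Rightarrow> ((real^'d) \<times> (real^'d)) measure set" where
  "couplings \<mu> \<nu> = {\<gamma>. prob_space \<gamma> \<and> sets \<gamma> = sets (borel :: ((real^'d) \<times> (real^'d)) measure)
      \<and> distr \<gamma> (borel :: (real^'d) measure) fst = \<mu> \<and> distr \<gamma> (borel :: (real^'d) measure) snd = \<nu>}"

definition transport_dual :: "(real^'d) measure \<Rightarrow> (real^'d) measure \<Rightarrow> bool" where
  "transport_dual \<mu> \<nu> \<longleftrightarrow> finite_second_moment \<nu> \<and>
     (\<exists>\<gamma>\<in>couplings \<mu> \<nu>. integrable \<gamma> (\<lambda>(x,y). outer x y)
        \<and> (\<integral>p. (case p of (x,y) \<Rightarrow> outer x y) \<partial>\<gamma>) = mat 1)"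

end

theory Submission
  imports Defs
begin

lemma exists_w:
  fixes \<phi> :: "'d::finite \<Rightarrow> real^'d"
  obtains w :: "real^'d" where "w \<noteq> 0" "\<And>k. \<phi> k \<bullet> w = \<phi> k0 \<bullet> w"
proof -
  define S where "S = (\<lambda>k. \<phi> k - \<phi> k0) ` (UNIV - {k0})"
  have "finite S" unfolding S_def by simp
  have "card S \<le> card (UNIV - {k0} :: 'd set)" unfolding S_def by (rule card_image_le) simp
  also have "\<dots> < CARD('d)" by (simp add: card_Diff_subset)
  finally have "dim S < DIM(real^'d)" using dim_le_card'[OF \<open>finite S\<close>] by simp
  then obtain w where w: "w \<noteq> 0" "\<And>y. y \<in> span S \<Longrightarrow> orthogonal w y"
    using orthogonal_to_subspace_exists by blast
  have "\<phi> k \<bullet> w = \<phi> k0 \<bullet> w" for k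
  proof (cases "k = k0")
    case False
    then have "\<phi> k - \<phi> k0 \<in> span S" unfolding S_def by (auto intro: span_base)
    then have "w \<bullet> (\<phi> k - \<phi> k0) = 0" using w(2) orthogonal_def by blast
    then show ?thesis by (simp add: inner_diff_right inner_commute)
  qed simp
  with w show ?thesis using that by blast
qed

lemma outer_T: "w \<bullet> (outer x y *v w) = (w \<bullet> x) * (y \<bullet> w)"
  unfolding outer_def inner_vec_def matrix_vector_mult_def 
  apply (simp add: sum_distrib_left sum_distrib_right mult_ac)
  apply (rule trans[OF sum.swap]) apply (simp add: mult_ac)
  done

lemma bl_T: "bounded_linear (\<lambda>M::real^'d^'d. w \<bullet> (M *v w))"
proof -
  have "linear (\<lambda>M::real^'d^'d. w \<bullet> (M *v w))"
    by (rule linearI) (simp_all add: matrix_vector_mult_def inner_vec_def sum_distrib_left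
        algebra_simps sum.distrib sum_distrib_right)
  then show ?thesis by (simp add: linear_conv_bounded_linear)
qed

theorem mainTheorem3:
  fixes \<psi> :: "nat \<Rightarrow> real^'d" and N :: nat
  assumes "finite_frame N \<psi>"
    and "(\<Sum>i<N. \<psi> i) = 0"
  shows "\<not> (\<exists>\<phi> :: 'd \<Rightarrow> real^'d. inj \<phi> \<and>
            transport_dual (empirical_measure {..<N} \<psi>) (empirical_measure UNIV \<phi>))"
proof
  assume "\<exists>\<phi> :: 'd \<Rightarrow> real^'d. inj \<phi> \<and>
            transport_dual (empirical_measure {..<N} \<psi>) (empirical_measure UNIV \<phi>)"
  then obtain \<phi> :: "'d \<Rightarrow> real^'d" and \<gamma> where
    g: "\<gamma> \<in> couplings (empirical_measure {..<N} \<psi>) (empirical_measure UNIV \<phi>)"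
    and int: "integrable \<gamma> (\<lambda>(x,y). outer x y)"
    and eq: "(\<integral>p. (case p of (x,y) \<Rightarrow> outer x y) \<partial>\<gamma>) = mat 1"
    unfolding transport_dual_def by blast
  obtain k0 :: 'd where True by simp
  obtain w :: "real^'d" where w: "w \<noteq> 0" "\<And>k. \<phi> k \<bullet> w = \<phi> k0 \<bullet> w"
    using exists_w by blast
  define c where "c = \<phi> k0 \<bullet> w"
  have sg: "sets \<gamma> = sets (borel :: ((real^'d) \<times> (real^'d)) measure)"
    and m1: "distr \<gamma> (borel :: (real^'d) measure) fst = empirical_measure {..<N} \<psi>"
    and m2: "distr \<gamma> (borel :: (real^'d) measure) snd = empirical_measure UNIV \<phi>"
    using CollectD[OF g[unfolded couplings_def]] by (simp_all only:)
  have fstm: "fst \<in> measurable \<gamma> (borel :: (real^'d) measure)"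
    unfolding measurable_cong_sets[OF sg refl]
    by (intro borel_measurable_continuous_onI continuous_intros)
  have sndm: "snd \<in> measurable \<gamma> (borel :: (real^'d) measure)"
    unfolding measurable_cong_sets[OF sg refl]
    by (intro borel_measurable_continuous_onI continuous_intros)
  have phim: "\<phi> \<in> measurable (uniform_count_measure UNIV) (borel :: (real^'d) measure)"
    by (simp add: measurable_count_space_eq1 measurable_cong_sets[OF sets_uniform_count_measure_count_space refl])
  have psim: "\<psi> \<in> measurable (uniform_count_measure {..<N}) (borel :: (real^'d) measure)"
    by (simp add: measurable_count_space_eq1 measurable_cong_sets[OF sets_uniform_count_measure_count_space refl])
  have rng: "range \<phi> \<in> sets (borel :: (real^'d) measure)"
    by (intro borel_closed finite_imp_closed) simp
  have "AE y in empirical_measure UNIV \<phi>. y \<in> range \<phi>"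
    unfolding empirical_measure_def
    by (subst AE_distr_iff[OF phim]) (use rng in auto)
  then have "AE y in distr \<gamma> (borel :: (real^'d) measure) snd. y \<in> range \<phi>"
    by (simp only: m2)
  then have "AE p in \<gamma>. snd p \<in> range \<phi>"
    by (rule AE_distrD[OF sndm])
  then have ae: "AE p in \<gamma>. (w \<bullet> fst p) * (snd p \<bullet> w) = c * (w \<bullet> fst p)"
  proof (rule AE_mp)
    show "AE p in \<gamma>. snd p \<in> range \<phi> \<longrightarrow> (w \<bullet> fst p) * (snd p \<bullet> w) = c * (w \<bullet> fst p)"
    proof (rule AE_I2, rule impI)
      fix p :: "(real^'d) \<times> (real^'d)" assume "snd p \<in> range \<phi>"
      then obtain k where "snd p = \<phi> k" by blast
      then have "snd p \<bullet> w = c" unfolding c_def using w(2)[of k] by simp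
      then show "(w \<bullet> fst p) * (snd p \<bullet> w) = c * (w \<bullet> fst p)" by (simp add: mult.commute)
    qed
  qed
  have bm1: "(\<lambda>p::(real^'d)\<times>(real^'d). (w \<bullet> fst p) * (snd p \<bullet> w)) \<in> borel_measurable \<gamma>"
    unfolding measurable_cong_sets[OF sg refl]
    by (intro borel_measurable_continuous_onI continuous_intros)
  have bm2: "(\<lambda>p::(real^'d)\<times>(real^'d). c * (w \<bullet> fst p)) \<in> borel_measurable \<gamma>"
    unfolding measurable_cong_sets[OF sg refl]
    by (intro borel_measurable_continuous_onI continuous_intros)
  have "(\<integral>p. w \<bullet> fst p \<partial>\<gamma>) = (\<integral>x. w \<bullet> x \<partial>(distr \<gamma> borel fst))"
    by (rule integral_distr[OF fstm, symmetric]) simp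
  also have "\<dots> = (\<integral>x. w \<bullet> x \<partial>(empirical_measure {..<N} \<psi>))" using m1 by simp
  also have "\<dots> = (\<integral>i. w \<bullet> \<psi> i \<partial>(uniform_count_measure {..<N}))"
    unfolding empirical_measure_def by (rule integral_distr[OF psim]) simp
  also have "\<dots> = (\<Sum>i<N. w \<bullet> \<psi> i) / card {..<N}"
    by (simp add: integral_uniform_count_measure)
  also have "\<dots> = 0" using assms(2) by (simp add: inner_sum_right[symmetric])
  finally have z: "(\<integral>p. w \<bullet> fst p \<partial>\<gamma>) = 0" .
  have "w \<bullet> (mat 1 *v w) = w \<bullet> ((\<integral>p. (case p of (x,y) \<Rightarrow> outer x y) \<partial>\<gamma>) *v w)"
    using eq by simp
  also have "\<dots> = (\<integral>p. w \<bullet> ((case p of (x,y) \<Rightarrow> outer x y) *v w) \<partial>\<gamma>)"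
    by (rule integral_bounded_linear[OF bl_T int, symmetric])
  also have "\<dots> = (\<integral>p. (w \<bullet> fst p) * (snd p \<bullet> w) \<partial>\<gamma>)"
    by (simp add: case_prod_beta outer_T)
  also have "\<dots> = (\<integral>p. c * (w \<bullet> fst p) \<partial>\<gamma>)"
    by (rule integral_cong_AE[OF bm1 bm2 ae])
  also have "\<dots> = 0" using z by simp
  finally show False using w(1) by simp
qed

end
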